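(* Let $(h_n)_{n\ge 0}$ be a sequence of positive real numbers (not depending on $a$) and, for $a>0$, let \[ h(a,x)=\sum_{n=0}^{\infty}\frac{h_n}{(a)_n}x^n \] (a formal power series in $x$). Let $b>a>0$ and $\delta>0$, and write \[ \lambda_{a,b,\delta}(x)=h(a+\delta,x)h(b,x)-h(b+\delta,x)h(a,x)=\sum_{m=0}^{\infty}\lambda_m x^m . \] Then $\lambda_0=0$ and $\lambda_m<0$ for all $m\ge 1$, so that $a\mapsto h(a,x)$ is strictly log-convex for $x>0$.
   Context: $(a)_n=a(a+1)\cdots(a+n-1)$ is the Pochhammer symbol, $(a)_0=1$. Power series are understood formally; the log-convexity statement refers to values $x>0$ at which the series converge. *)

theory Defs
  imports "HOL-Analysis.Analysis" "HOL-Computational_Algebra.Formal_Power_Series"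
begin

definition hfps :: "(nat \<Rightarrow> real) \<Rightarrow> real \<Rightarrow> real fps" where
  "hfps hc a = Abs_fps (\<lambda>n. hc n / pochhammer a n)"

definition lam_fps :: "(nat \<Rightarrow> real) \<Rightarrow> real \<Rightarrow> real \<Rightarrow> real \<Rightarrow> real fps" where
  "lam_fps hc a b d = hfps hc (a + d) * hfps hc b - hfps hc (b + d) * hfps hc a"

text \<open>Value of the series h(a,x) at a real point x (meaningful where it converges).\<close>
definition hval :: "(nat \<Rightarrow> real) \<Rightarrow> real \<Rightarrow> real \<Rightarrow> real" where
  "hval hc a x = (\<Sum>n. hc n / pochhammer a n * x ^ n)"

end

theory Submission
  imports Defs
begin


lemma decr_g:
  fixes c d x y :: real
  assumes "0 < x" "x < y" "0 < d" "0 \<le> c"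
  shows "1/(x+c) - 1/(x+d+c) > 1/(y+c) - 1/(y+d+c)"
proof -
  have e: "\<And>z. z > 0 \<Longrightarrow> 1/(z+c) - 1/(z+d+c) = d/((z+c)*(z+d+c))"
    using assms by (simp add: field_simps)
  have "(x+c)*(x+d+c) < (y+c)*(y+d+c)"
    using assms by (intro mult_strict_mono) auto
  then have "d/((y+c)*(y+d+c)) < d/((x+c)*(x+d+c))"
    using assms by (intro divide_strict_left_mono) auto
  then show ?thesis using e[of x] e[of y] assms by simp
qed

lemma G_props:
  fixes d :: real assumes d: "0 < d"
  shows "(\<forall>x::real>0. 1/pochhammer x n > 0)
    \<and> (\<forall>x y::real. 0 < x \<longrightarrow> x \<le> y \<longrightarrow> 1/pochhammer y n \<le> 1/pochhammer x n)
    \<and> (\<forall>x y::real. 0 < x \<longrightarrow> x < y \<longrightarrow>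
          1/pochhammer x n - 1/pochhammer (x+d) n \<ge> 1/pochhammer y n - 1/pochhammer (y+d) n
        \<and> (n \<ge> 1 \<longrightarrow> 1/pochhammer x n - 1/pochhammer (x+d) n > 1/pochhammer y n - 1/pochhammer (y+d) n))"
proof (induction n)
  case 0
  show ?case by (simp add: pochhammer_0)
next
  case (Suc n)
  define f where "f = (\<lambda>x::real. 1/pochhammer x n)"
  define g where "g = (\<lambda>x::real. 1/(x + real n))"
  have fg: "\<And>x. 1/pochhammer x (Suc n) = f x * g x"
    by (simp add: f_def g_def pochhammer_Suc)
  have fpos: "\<And>x. x > 0 \<Longrightarrow> f x > 0" using Suc.IH by (simp add: f_def)
  have fmono: "\<And>x y. 0 < x \<Longrightarrow> x \<le> y \<Longrightarrow> f y \<le> f x" using Suc.IH by (simp add: f_def)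
  have fD: "\<And>x y. 0 < x \<Longrightarrow> x < y \<Longrightarrow> f x - f (x+d) \<ge> f y - f (y+d)"
    using Suc.IH by (simp add: f_def)
  have gpos: "\<And>x. x > 0 \<Longrightarrow> g x > 0" by (simp add: g_def)
  have gmono: "\<And>x y. 0 < x \<Longrightarrow> x \<le> y \<Longrightarrow> g y \<le> g x"
    by (simp add: g_def frac_le)
  have gD: "\<And>x y. 0 < x \<Longrightarrow> x < y \<Longrightarrow> g x - g (x+d) > g y - g (y+d)"
    using decr_g[OF _ _ d, of _ _ "real n"] by (simp add: g_def add_ac)
  have P1: "\<forall>x::real>0. 1/pochhammer x (Suc n) > 0"
  proof (intro allI impI)
    fix x :: real assume "x > 0"
    then have "f x * g x > 0" using fpos gpos by simp
    then show "1/pochhammer x (Suc n) > 0" by (simp only: fg)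
  qed
  have P2: "\<forall>x y::real. 0 < x \<longrightarrow> x \<le> y \<longrightarrow> 1/pochhammer y (Suc n) \<le> 1/pochhammer x (Suc n)"
  proof (intro allI impI)
    fix x y :: real assume "0 < x" "x \<le> y"
    then have "f y * g y \<le> f x * g x"
      using fpos gpos fmono gmono by (intro mult_mono) (auto intro: less_imp_le)
    then show "1/pochhammer y (Suc n) \<le> 1/pochhammer x (Suc n)" by (simp add: fg)
  qed
  have P3: "\<And>x y. 0 < x \<Longrightarrow> x < y \<Longrightarrow>
     f x * g x - f (x+d) * g (x+d) > f y * g y - f (y+d) * g (y+d)"
  proof -
    fix x y :: real assume xy: "0 < x" "x < y"
    have id: "\<And>z. f z * g z - f (z+d) * g (z+d) = f z * (g z - g (z+d)) + g (z+d) * (f z - f (z+d))"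
      by (simp add: algebra_simps)
    have gDy: "g y - g (y+d) \<ge> 0" using gmono[of y "y+d"] xy d by simp
    have fDy: "f y - f (y+d) \<ge> 0" using fmono[of y "y+d"] xy d by simp
    have "f y * (g y - g (y+d)) < f x * (g x - g (x+d))"
    proof -
      have "f y * (g y - g (y+d)) < f y * (g x - g (x+d))"
        using fpos[of y] gD[OF xy] xy by simp
      also have "\<dots> \<le> f x * (g x - g (x+d))"
        using fmono[of x y] xy gD[OF xy] gDy by (intro mult_right_mono) auto
      finally show ?thesis .
    qed
    moreover have "g (y+d) * (f y - f (y+d)) \<le> g (x+d) * (f x - f (x+d))"
      using gmono[of "x+d" "y+d"] fD[OF xy] fDy gpos[of "y+d"] xy d
      by (intro mult_mono) auto
    ultimately show "f x * g x - f (x+d) * g (x+d) > f y * g y - f (y+d) * g (y+d)"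
      using id[of x] id[of y] by linarith
  qed
  show ?case using P1 P2 P3 by (auto simp: fg intro: less_imp_le)
qed




lemma P_ineq:
  fixes a b d :: real assumes "0 < a" "a < b" "0 < d"
  shows "pochhammer a j * pochhammer (b+d) j \<le> pochhammer (a+d) j * pochhammer b j
     \<and> (j \<ge> 1 \<longrightarrow> pochhammer a j * pochhammer (b+d) j < pochhammer (a+d) j * pochhammer b j)"
proof (induction j)
  case 0 then show ?case by simp
next
  case (Suc j)
  define A where "A = pochhammer a j * pochhammer (b+d) j"
  define B where "B = pochhammer (a+d) j * pochhammer b j"
  define u where "u = (a + real j) * (b + d + real j)"
  define v where "v = (a + d + real j) * (b + real j)"
  have Apos: "A > 0" using assms by (simp add: A_def pochhammer_pos)
  have Bpos: "B > 0" using assms by (simp add: B_def pochhammer_pos)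
  have upos: "u > 0" using assms by (simp add: u_def)
  have uv: "u < v"
  proof -
    have "v - u = d * (b - a)" by (simp add: u_def v_def algebra_simps)
    moreover have "d * (b - a) > 0" using assms by simp
    ultimately show ?thesis by linarith
  qed
  have AB: "A \<le> B" using Suc.IH by (simp add: A_def B_def)
  have "A * u < B * v"
  proof -
    have "A * u \<le> B * u" using AB upos by simp
    also have "\<dots> < B * v" using Bpos uv by simp
    finally show ?thesis .
  qed
  moreover have "pochhammer a (Suc j) * pochhammer (b+d) (Suc j) = A * u"
    by (simp add: A_def u_def pochhammer_Suc algebra_simps)
  moreover have "pochhammer (a+d) (Suc j) * pochhammer b (Suc j) = B * v"
    by (simp add: B_def v_def pochhammer_Suc algebra_simps)
  ultimately show ?case by simp
qed

lemma K0:
  fixes a b d :: real assumes ab: "0 < a" "a < b" and d: "0 < d" and jk: "j \<le> k" "1 \<le> k + j"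
  shows "1/(pochhammer (a+d) k * pochhammer b j) + 1/(pochhammer (a+d) j * pochhammer b k)
       < 1/(pochhammer (b+d) k * pochhammer a j) + 1/(pochhammer (b+d) j * pochhammer a k)"
proof -
  obtain n where kn: "k = j + n" using jk by (metis le_add_diff_inverse)
  define p1 where "p1 = pochhammer (a+d) j * pochhammer b j"
  define p2 where "p2 = pochhammer a j * pochhammer (b+d) j"
  define G where "G = (\<lambda>x::real. 1/pochhammer x n)"
  define s1 where "s1 = G (a+d+real j) + G (b+real j)"
  define s2 where "s2 = G (a+real j) + G (b+d+real j)"
  have pos: "\<And>x::real. x > 0 \<Longrightarrow> pochhammer x n > 0" by (simp add: pochhammer_pos)
  have pos': "\<And>x::real. x > 0 \<Longrightarrow> pochhammer x j > 0" by (simp add: pochhammer_pos)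
  have p1pos: "p1 > 0" using ab d by (simp add: p1_def pos')
  have p2pos: "p2 > 0" using ab d by (simp add: p2_def pos')
  have "a+d+real j > 0" "b + real j > 0" using ab d by simp_all
  then have s1pos: "s1 > 0" using pos[of "a+d+real j"] pos[of "b+real j"] by (simp add: s1_def G_def add_pos_pos)
  have Gp: "G (a+real j) - G (a+real j+d) \<ge> G (b+real j) - G (b+real j+d)
        \<and> (n \<ge> 1 \<longrightarrow> G (a+real j) - G (a+real j+d) > G (b+real j) - G (b+real j+d))"
    using G_props[OF d, of n] ab by (simp add: G_def)
  have e1: "a + real j + d = a + d + real j" "b + real j + d = b + d + real j" by simp_all
  have s12: "s1 \<le> s2" "n \<ge> 1 \<Longrightarrow> s1 < s2" using Gp unfolding s1_def s2_def e1 by auto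
  have p12: "p2 \<le> p1" "j \<ge> 1 \<Longrightarrow> p2 < p1" using P_ineq[OF ab d, of j]
    by (auto simp: p1_def p2_def mult.commute)
  have q: "pochhammer (a+d+real j) n > 0" "pochhammer (b+real j) n > 0"
     "pochhammer (a+real j) n > 0" "pochhammer (b+d+real j) n > 0"
     "pochhammer a j > 0" "pochhammer b j > 0" "pochhammer (a+d) j > 0" "pochhammer (b+d) j > 0"
    using ab d by (simp_all add: pos pos')
  have L: "1/(pochhammer (a+d) k * pochhammer b j) + 1/(pochhammer (a+d) j * pochhammer b k) = s1/p1"
    using q by (simp add: kn pochhammer_product' s1_def G_def p1_def field_simps)
  have R: "1/(pochhammer (b+d) k * pochhammer a j) + 1/(pochhammer (b+d) j * pochhammer a k) = s2/p2"
    using q by (simp add: kn pochhammer_product' s2_def G_def p2_def field_simps)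
  have "s1/p1 < s2/p2"
  proof (cases "j \<ge> 1")
    case True
    have "s1/p1 < s1/p2" using p12(2)[OF True] p2pos s1pos by (simp add: divide_strict_left_mono)
    also have "\<dots> \<le> s2/p2" using s12(1) p2pos by (simp add: divide_right_mono)
    finally show ?thesis .
  next
    case False
    then have "n \<ge> 1" using jk kn by simp
    have "s1/p1 \<le> s1/p2" using p12(1) p2pos s1pos by (simp add: divide_left_mono)
    also have "\<dots> < s2/p2" using s12(2)[OF \<open>n \<ge> 1\<close>] p2pos by (simp add: divide_strict_right_mono)
    finally show ?thesis .
  qed
  then show ?thesis using L R by simp
qed

lemma K:
  fixes a b d :: real assumes ab: "0 < a" "a < b" and d: "0 < d" and jk: "1 \<le> k + j"
  shows "1/(pochhammer (a+d) k * pochhammer b j) + 1/(pochhammer (a+d) j * pochhammer b k)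
       < 1/(pochhammer (b+d) k * pochhammer a j) + 1/(pochhammer (b+d) j * pochhammer a k)"
proof (cases "j \<le> k")
  case True then show ?thesis using K0[OF ab d True jk] by simp
next
  case False
  then have "k \<le> j" by simp
  from K0[OF ab d this] jk show ?thesis by (simp add: add_ac)
qed

theorem theorem3:
  fixes hc :: "nat \<Rightarrow> real" and a b d :: real
  assumes hpos: "\<And>n. hc n > 0"
    and ab: "0 < a" "a < b" and dpos: "0 < d"
  shows "fps_nth (lam_fps hc a b d) 0 = 0
       \<and> (\<forall>m\<ge>1. fps_nth (lam_fps hc a b d) m < 0)
       \<and> (\<forall>x>0. (\<forall>c\<in>{a, b, a + d, b + d}. summable (\<lambda>n. hc n / pochhammer c n * x ^ n)) \<longrightarrow>
                hval hc (a + d) x * hval hc b x < hval hc (b + d) x * hval hc a x)"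
proof -
  define E where "E = (\<lambda>m i. hc i / pochhammer (a+d) i * (hc (m-i) / pochhammer b (m-i))
       - hc i / pochhammer (b+d) i * (hc (m-i) / pochhammer a (m-i)))"
  have lamE: "\<And>m. fps_nth (lam_fps hc a b d) m = (\<Sum>i=0..m. E m i)"
    by (simp add: lam_fps_def hfps_def fps_mult_nth E_def sum_subtractf)
  have ad: "0 < a + d" "0 < b" "0 < b + d" using ab dpos by simp_all
  have pp: "\<And>c i. c > 0 \<Longrightarrow> pochhammer c i > (0::real)" by (simp add: pochhammer_pos)
  have part1: "fps_nth (lam_fps hc a b d) 0 = 0" by (simp add: lamE E_def)
  have part2: "\<forall>m\<ge>1. fps_nth (lam_fps hc a b d) m < 0"
  proof (intro allI impI)
    fix m :: nat assume m: "1 \<le> m"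
    have pair: "E m i + E m (m-i) < 0" if i: "i \<le> m" for i
    proof -
      define j where "j = m - i"
      have mj: "m - j = i" using i by (simp add: j_def)
      have "1 \<le> i + j" using m i by (simp add: j_def)
      note KK = K[OF ab dpos this]
      have "E m i + E m (m-i) = hc i * hc j *
         ((1/(pochhammer (a+d) i * pochhammer b j) + 1/(pochhammer (a+d) j * pochhammer b i))
         - (1/(pochhammer (b+d) i * pochhammer a j) + 1/(pochhammer (b+d) j * pochhammer a i)))"
        unfolding E_def j_def[symmetric] mj by (simp add: algebra_simps)
      also have "\<dots> < 0" using KK hpos[of i] hpos[of j]
        by (intro mult_pos_neg) auto
      finally show ?thesis .
    qed
    have rev: "(\<Sum>i=0..m. E m (m-i)) = (\<Sum>i=0..m. E m i)"
      using sum.atLeastAtMost_rev[of "E m" 0 m] by simp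
    have "(\<Sum>i=0..m. E m i + E m (m-i)) < (\<Sum>i=0..m. (0::real))"
      by (rule sum_strict_mono) (auto intro: pair)
    then have "2 * (\<Sum>i=0..m. E m i) < 0" using rev by (simp add: sum.distrib)
    then show "fps_nth (lam_fps hc a b d) m < 0" by (simp add: lamE)
  qed
  have part3: "\<forall>x>0. (\<forall>c\<in>{a, b, a + d, b + d}. summable (\<lambda>n. hc n / pochhammer c n * x ^ n)) \<longrightarrow>
                hval hc (a + d) x * hval hc b x < hval hc (b + d) x * hval hc a x"
  proof (intro allI impI)
    fix x :: real assume x: "x > 0" and sm: "\<forall>c\<in>{a, b, a + d, b + d}. summable (\<lambda>n. hc n / pochhammer c n * x ^ n)"
    define u where "u = (\<lambda>c n. hc n / pochhammer c n * x ^ n)"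
    have upos: "\<And>c n. c > 0 \<Longrightarrow> u c n > 0" using x hpos by (simp add: u_def pp)
    have smn: "summable (\<lambda>n. norm (u c n))" if "c \<in> {a, b, a + d, b + d}" for c
    proof -
      have "c > 0" using that ab ad by auto
      then have "(\<lambda>n. norm (u c n)) = u c" using upos by (auto simp: fun_eq_iff less_imp_le)
      moreover have "summable (u c)" using sm that unfolding u_def by blast
      ultimately show ?thesis by simp
    qed
    have S1: "(\<lambda>k. \<Sum>i\<le>k. u (a+d) i * u b (k - i)) sums (hval hc (a + d) x * hval hc b x)"
      using Cauchy_product_sums[OF smn smn, of "a+d" b] by (simp add: hval_def u_def)
    have S2: "(\<lambda>k. \<Sum>i\<le>k. u (b+d) i * u a (k - i)) sums (hval hc (b + d) x * hval hc a x)"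
      using Cauchy_product_sums[OF smn smn, of "b+d" a] by (simp add: hval_def u_def)
    define t where "t = (\<lambda>k. fps_nth (lam_fps hc a b d) k * x ^ k)"
    have teq: "(\<lambda>k. (\<Sum>i\<le>k. u (a+d) i * u b (k - i)) - (\<Sum>i\<le>k. u (b+d) i * u a (k - i))) = t"
    proof
      fix k
      have "(\<Sum>i\<le>k. u (a+d) i * u b (k - i)) - (\<Sum>i\<le>k. u (b+d) i * u a (k - i))
          = (\<Sum>i\<le>k. E k i * x ^ k)"
        unfolding sum_subtractf[symmetric]
      proof (rule sum.cong)
        fix i assume "i \<in> {..k}"
        then have "x ^ k = x ^ i * x ^ (k - i)" by (simp add: power_add[symmetric])
        then show "u (a+d) i * u b (k - i) - u (b+d) i * u a (k - i) = E k i * x ^ k"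
          by (simp add: u_def E_def algebra_simps)
      qed simp
      also have "\<dots> = t k" by (simp add: t_def lamE sum_distrib_right atLeast0AtMost)
      finally show "(\<Sum>i\<le>k. u (a+d) i * u b (k - i)) - (\<Sum>i\<le>k. u (b+d) i * u a (k - i)) = t k" .
    qed
    have St: "t sums (hval hc (a + d) x * hval hc b x - hval hc (b + d) x * hval hc a x)"
      using sums_diff[OF S1 S2] teq by simp
    have "0 < suminf (\<lambda>k. - t k)"
    proof (rule suminf_pos2[of _ 1])
      show "summable (\<lambda>k. - t k)" using St summable_minus sums_summable by blast
      show "0 \<le> - t n" for n
      proof (cases "n = 0")
        case True then show ?thesis by (simp add: t_def part1)
      next
        case False
        then have "fps_nth (lam_fps hc a b d) n < 0" using part2 by simp
        then show ?thesis using x by (simp add: t_def mult_neg_pos less_imp_le)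
      qed
      show "0 < - t 1" using part2 x by (simp add: t_def mult_neg_pos)
    qed
    moreover have "suminf (\<lambda>k. - t k) = - (hval hc (a + d) x * hval hc b x - hval hc (b + d) x * hval hc a x)"
      using St sums_minus sums_unique by metis
    ultimately show "hval hc (a + d) x * hval hc b x < hval hc (b + d) x * hval hc a x" by simp
  qed
  show ?thesis using part1 part2 part3 by blast
qed

end
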